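(* Let $G$ be a graph with maximum degree $\Delta$. Then $\chi_{ei}(G)\le \Delta(\Delta-1)^2+1$. This bound is attained (with equality) by every odd cycle $C_n$ with $n\ge 5$.
   Context: All graphs are finite and simple. A path $P_4$ in $G$ is a sequence $uxyv$ of four distinct vertices with $ux,xy,yv\in E(G)$; $u,v$ are its end vertices. An $e$-injective $k$-coloring of $G$ is a function $f:V(G)\to\{1,\dots,k\}$ with $f(u)\ne f(v)$ whenever $u,v$ are the end vertices of some path $P_4$ in $G$; $\chi_{ei}(G)$ is the least such $k$. $C_n$ is the cycle on $n$ vertices. *)

theory Defs
  imports Main
begin

definition simple_graph :: "'a set \<Rightarrow> ('a \<Rightarrow> 'a \<Rightarrow> bool) \<Rightarrow> bool" where
  "simple_graph V E \<longleftrightarrow> finite V \<and>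
     (\<forall>u v. E u v \<longrightarrow> u \<in> V \<and> v \<in> V \<and> u \<noteq> v \<and> E v u)"

definition P4_ends :: "('a \<Rightarrow> 'a \<Rightarrow> bool) \<Rightarrow> 'a \<Rightarrow> 'a \<Rightarrow> bool" where
  "P4_ends E u v \<longleftrightarrow> (\<exists>x y. distinct [u, x, y, v] \<and> E u x \<and> E x y \<and> E y v)"

definition ei_coloring :: "'a set \<Rightarrow> ('a \<Rightarrow> 'a \<Rightarrow> bool) \<Rightarrow> nat \<Rightarrow> ('a \<Rightarrow> nat) \<Rightarrow> bool" where
  "ei_coloring V E k f \<longleftrightarrow> (\<forall>v\<in>V. f v \<in> {1..k}) \<and>
     (\<forall>u v. P4_ends E u v \<longrightarrow> f u \<noteq> f v)"

definition chi_ei :: "'a set \<Rightarrow> ('a \<Rightarrow> 'a \<Rightarrow> bool) \<Rightarrow> nat" where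
  "chi_ei V E = (LEAST k. \<exists>f. ei_coloring V E k f)"

definition degree :: "'a set \<Rightarrow> ('a \<Rightarrow> 'a \<Rightarrow> bool) \<Rightarrow> 'a \<Rightarrow> nat" where
  "degree V E v = card {u \<in> V. E v u}"

definition max_degree :: "'a set \<Rightarrow> ('a \<Rightarrow> 'a \<Rightarrow> bool) \<Rightarrow> nat" where
  "max_degree V E = Max (insert 0 (degree V E ` V))"

definition cycle_adj :: "nat \<Rightarrow> nat \<Rightarrow> nat \<Rightarrow> bool" where
  "cycle_adj n i j \<longleftrightarrow> i < n \<and> j < n \<and> (j = (i + 1) mod n \<or> i = (j + 1) mod n)"

end

theory Submission
  imports Defs
begin

lemma greedy_aux:
  fixes R :: "'a \<Rightarrow> 'a \<Rightarrow> bool"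
  assumes fin: "finite V" and deg: "\<forall>u\<in>V. card {v\<in>V. R u v} \<le> d"
    and sym: "\<forall>u v. R u v \<longrightarrow> R v u" and irr: "\<forall>u. \<not> R u u"
  shows "S \<subseteq> V \<Longrightarrow> \<exists>f. (\<forall>v\<in>S. f v \<in> {1..d+1}) \<and> (\<forall>u\<in>S. \<forall>v\<in>S. R u v \<longrightarrow> f u \<noteq> f v)"
proof (induction S rule: infinite_finite_induct)
  case (infinite A)
  then show ?case using fin finite_subset by blast
next
  case empty
  then show ?case by auto
next
  case (insert x S)
  then obtain f where f1: "\<forall>v\<in>S. f v \<in> {1..d+1}"
    and f2: "\<forall>u\<in>S. \<forall>v\<in>S. R u v \<longrightarrow> f u \<noteq> f v" by auto
  have xV: "x \<in> V" using insert by auto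
  let ?C = "f ` {v\<in>S. R x v}"
  have "card ?C \<le> card {v\<in>S. R x v}" using insert by (intro card_image_le) auto
  also have "\<dots> \<le> card {v\<in>V. R x v}" using insert fin by (intro card_mono) auto
  also have "\<dots> \<le> d" using deg xV by auto
  finally have cC: "card ?C \<le> d" .
  have "\<not> {1..d+1} \<subseteq> ?C"
  proof
    assume "{1..d+1} \<subseteq> ?C"
    then have "card {1..d+1} \<le> card ?C" using insert by (intro card_mono) auto
    then show False using cC by simp
  qed
  then obtain c where c: "c \<in> {1..d+1}" "c \<notin> ?C" by blast
  show ?case
  proof (intro exI[of _ "f(x := c)"] conjI ballI impI)
    fix v assume "v \<in> insert x S" then show "(f(x := c)) v \<in> {1..d+1}" using f1 c by auto
  next
    fix u v assume "u \<in> insert x S" "v \<in> insert x S" "R u v"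
    then show "(f(x := c)) u \<noteq> (f(x := c)) v"
    proof (cases "u = x")
      case True
      then have "v \<noteq> x" using irr \<open>R u v\<close> by auto
      then have "v \<in> S" "R x v" using \<open>v \<in> insert x S\<close> \<open>R u v\<close> True by auto
      then have "f v \<in> ?C" by blast
      then show ?thesis using True \<open>v \<noteq> x\<close> c(2) by auto
    next
      case False
      then have uS: "u \<in> S" using \<open>u \<in> insert x S\<close> by auto
      show ?thesis
      proof (cases "v = x")
        case True
        then have "R x u" using sym \<open>R u v\<close> by blast
        then have "f u \<in> ?C" using uS by blast
        then show ?thesis using True False c(2) by auto
      next
        case F2: False
        then have "v \<in> S" using \<open>v \<in> insert x S\<close> by auto
        then show ?thesis using f2 uS False F2 \<open>R u v\<close> by auto
      qed
    qed
  qed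
qed

lemma greedy:
  fixes R :: "'a \<Rightarrow> 'a \<Rightarrow> bool"
  assumes fin: "finite V" and deg: "\<forall>u\<in>V. card {v\<in>V. R u v} \<le> d"
    and sym: "\<forall>u v. R u v \<longrightarrow> R v u" and irr: "\<forall>u. \<not> R u u"
  shows "\<exists>f. (\<forall>v\<in>V. f v \<in> {1..d+1}) \<and> (\<forall>u\<in>V. \<forall>v\<in>V. R u v \<longrightarrow> f u \<noteq> f v)"
  using greedy_aux[OF assms] by blast

lemma deg_le_max:
  assumes "finite V" "v \<in> V"
  shows "card {u\<in>V. E v u} \<le> max_degree V E"
  unfolding max_degree_def using assms
  by (intro Max_ge) (auto simp: degree_def)

lemma part1_ex:
  fixes V :: "'a set"
  assumes G: "simple_graph V E"
  shows "\<exists>f. ei_coloring V E (max_degree V E * (max_degree V E - 1)^2 + 1) f"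
proof -
  define D where "D = max_degree V E"
  define N where "N = (\<lambda>w. {z\<in>V. E w z})"
  have fin: "finite V" using G by (simp add: simple_graph_def)
  have Eprop: "\<And>u v. E u v \<Longrightarrow> u \<in> V \<and> v \<in> V \<and> u \<noteq> v \<and> E v u"
    using G by (simp add: simple_graph_def)
  have finN: "\<And>w. finite (N w)" unfolding N_def using fin by auto
  have cN: "\<And>w. w \<in> V \<Longrightarrow> card (N w) \<le> D"
    unfolding N_def D_def using deg_le_max[OF fin] by blast
  have cN1: "\<And>a b. E a b \<Longrightarrow> card (N b - {a}) \<le> D - 1"
  proof -
    fix a b assume ab: "E a b"
    then have "a \<in> N b" "b \<in> V" using Eprop unfolding N_def by auto
    then have "card (N b - {a}) = card (N b) - 1" using finN by (simp add: card_Diff_singleton)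
    then show "card (N b - {a}) \<le> D - 1" using cN[OF \<open>b \<in> V\<close>] by simp
  qed
  have cnt: "card {v\<in>V. P4_ends E u v} \<le> D * (D - 1)^2" if uV: "u \<in> V" for u
  proof -
    have sub: "{v\<in>V. P4_ends E u v} \<subseteq> (\<Union>x\<in>N u. \<Union>y\<in>N x - {u}. N y - {x})"
    proof
      fix v assume "v \<in> {v\<in>V. P4_ends E u v}"
      then obtain x y where "distinct [u, x, y, v]" "E u x" "E x y" "E y v"
        unfolding P4_ends_def by blast
      then show "v \<in> (\<Union>x\<in>N u. \<Union>y\<in>N x - {u}. N y - {x})"
        unfolding N_def using Eprop by auto
    qed
    have "card {v\<in>V. P4_ends E u v} \<le> card (\<Union>x\<in>N u. \<Union>y\<in>N x - {u}. N y - {x})"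
      using sub finN by (intro card_mono) auto
    also have "\<dots> \<le> (\<Sum>x\<in>N u. card (\<Union>y\<in>N x - {u}. N y - {x}))"
      using finN by (intro card_UN_le) auto
    also have "\<dots> \<le> (\<Sum>x\<in>N u. (\<Sum>y\<in>N x - {u}. card (N y - {x})))"
      using finN by (intro sum_mono card_UN_le) auto
    also have "\<dots> \<le> (\<Sum>x\<in>N u. (\<Sum>y\<in>N x - {u}. D - 1))"
      by (intro sum_mono cN1) (auto simp: N_def)
    also have "\<dots> = (\<Sum>x\<in>N u. card (N x - {u}) * (D - 1))" by simp
    also have "\<dots> \<le> (\<Sum>x\<in>N u. (D - 1) * (D - 1))"
      by (intro sum_mono mult_le_mono1 cN1) (auto simp: N_def)
    also have "\<dots> = card (N u) * ((D - 1) * (D - 1))" by simp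
    also have "\<dots> \<le> D * (D - 1)^2"
      using cN[OF uV] by (simp add: power2_eq_square)
    finally show ?thesis .
  qed
  have sym: "\<forall>u v. P4_ends E u v \<longrightarrow> P4_ends E v u"
  proof (intro allI impI)
    fix u v assume "P4_ends E u v"
    then obtain x y where "distinct [u, x, y, v]" "E u x" "E x y" "E y v"
      unfolding P4_ends_def by blast
    then show "P4_ends E v u" unfolding P4_ends_def using Eprop
      by (intro exI[of _ y] exI[of _ x]) auto
  qed
  have irr: "\<forall>u. \<not> P4_ends E u u" unfolding P4_ends_def by auto
  obtain f where f1: "\<forall>v\<in>V. f v \<in> {1..D * (D - 1)^2 + 1}"
    and f2: "\<forall>u\<in>V. \<forall>v\<in>V. P4_ends E u v \<longrightarrow> f u \<noteq> f v"
  proof -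
    have "\<forall>u\<in>V. card {v\<in>V. P4_ends E u v} \<le> D * (D - 1)^2" using cnt by blast
    from greedy[OF fin this sym irr] show ?thesis using that by blast
  qed
  have "ei_coloring V E (D * (D - 1)^2 + 1) f"
    unfolding ei_coloring_def using f1 f2 Eprop unfolding P4_ends_def by blast
  then show ?thesis unfolding D_def by blast
qed

lemma suc_mod_ne: fixes u n :: nat assumes "u < n" "2 \<le> n" shows "(u + 1) mod n \<noteq> u"
proof (cases "u + 1 < n")
  case True then have "(u + 1) mod n = u + 1" by simp
  then show ?thesis by simp
next
  case False then have "u + 1 = n" using assms by simp
  then show ?thesis using assms by simp
qed

lemma cyc_simple: assumes "3 \<le> n" shows "simple_graph {0..<n} (cycle_adj n)"
  unfolding simple_graph_def
proof -
  have "u \<in> {0..<n} \<and> v \<in> {0..<n} \<and> u \<noteq> v \<and> cycle_adj n v u" if h: "cycle_adj n u v" for u v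
  proof -
  have "u < n" "v < n" using h unfolding cycle_adj_def by auto
  then show "u \<in> {0..<n} \<and> v \<in> {0..<n} \<and> u \<noteq> v \<and> cycle_adj n v u"
    using h suc_mod_ne[of u n] suc_mod_ne[of v n] assms unfolding cycle_adj_def by auto
  qed
  then show "finite {0..<n} \<and> (\<forall>u v. cycle_adj n u v \<longrightarrow> u \<in> {0..<n} \<and> v \<in> {0..<n} \<and> u \<noteq> v \<and> cycle_adj n v u)" by simp
qed

lemma cyc_nb: fixes u n i :: nat assumes "u < n" "i = (u + 1) mod n" shows "u = (i + n - 1) mod n"
proof (cases "u + 1 < n")
  case True
  then have "(u + 1) mod n = u + 1" by simp
  then have "i + n - 1 = u + n" using assms by simp
  then show ?thesis using assms by simp
next
  case False then have "u = n - 1" using assms by simp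
  then show ?thesis using assms by simp
qed

lemma cyc_deg_le: assumes "i < n" "3 \<le> n" shows "degree {0..<n} (cycle_adj n) i \<le> 2"
proof -
  have "{u \<in> {0..<n}. cycle_adj n i u} \<subseteq> {(i+1) mod n, (i+n-1) mod n}"
  proof
    fix u assume "u \<in> {u \<in> {0..<n}. cycle_adj n i u}"
    then have "u < n" "u = (i+1) mod n \<or> i = (u+1) mod n" unfolding cycle_adj_def by auto
    then show "u \<in> {(i+1) mod n, (i+n-1) mod n}" using cyc_nb[of u n i] by auto
  qed
  then have "card {u \<in> {0..<n}. cycle_adj n i u} \<le> card {(i+1) mod n, (i+n-1) mod n}"
    by (intro card_mono) auto
  also have "\<dots> \<le> 2" by (simp add: card_insert_if)
  finally show ?thesis unfolding degree_def .
qed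

lemma cyc_deg1: assumes "3 \<le> n" shows "degree {0..<n} (cycle_adj n) 1 \<ge> 2"
proof -
  have "{0, 2} \<subseteq> {u \<in> {0..<n}. cycle_adj n 1 u}"
    unfolding cycle_adj_def using assms by auto
  then have "card {0::nat, 2} \<le> card {u \<in> {0..<n}. cycle_adj n 1 u}"
    by (intro card_mono) auto
  then show ?thesis unfolding degree_def by simp
qed

lemma cyc_maxdeg: assumes "3 \<le> n" shows "max_degree {0..<n} (cycle_adj n) = 2"
proof (rule antisym)
  show "max_degree {0..<n} (cycle_adj n) \<le> 2"
    unfolding max_degree_def using cyc_deg_le[OF _ assms] by (subst Max_le_iff) auto
  have "degree {0..<n} (cycle_adj n) 1 \<le> max_degree {0..<n} (cycle_adj n)"
    unfolding max_degree_def using assms by (intro Max_ge) auto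
  then show "2 \<le> max_degree {0..<n} (cycle_adj n)" using cyc_deg1[OF assms] by simp
qed

lemma cyc_P4: assumes "5 \<le> n" "i < n" shows "P4_ends (cycle_adj n) i ((i+3) mod n)"
proof -
  have d: "distinct [i, (i+1) mod n, (i+2) mod n, (i+3) mod n]"
  proof -
    have "i + 3 < n \<or> i = n - 3 \<or> i = n - 2 \<or> i = n - 1" using assms by arith
    then show ?thesis
    proof (elim disjE)
      assume "i + 3 < n" then show ?thesis by simp
    next
      assume h: "i = n - 3"
      then have "(i + 1) mod n = i + 1" "(i + 2) mod n = i + 2" "(i + 3) mod n = 0" using assms by auto
      then show ?thesis using assms h by simp
    next
      assume h: "i = n - 2"
      then have "i + 2 = n" "i + 3 = n + 1" using assms by auto
      have a: "(i + 1) mod n = i + 1" "(i + 2) mod n = 0" using \<open>i + 2 = n\<close> by auto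
      have "(i + 3) mod n = (n + 1) mod n" by (simp only: \<open>i + 3 = n + 1\<close>)
      also have "\<dots> = 1" using assms mod_add_self1[of n 1] by simp
      finally have "(i + 3) mod n = 1" .
      note a this
      then show ?thesis using assms h by simp
    next
      assume h: "i = n - 1"
      then have "i + 1 = n" "i + 2 = n + 1" "i + 3 = n + 2" using assms by auto
      have a: "(i + 1) mod n = 0" using \<open>i + 1 = n\<close> by simp
      have "(i + 2) mod n = (n + 1) mod n" by (simp only: \<open>i + 2 = n + 1\<close>)
      also have "\<dots> = 1" using assms mod_add_self1[of n 1] by simp
      finally have b: "(i + 2) mod n = 1" .
      have "(i + 3) mod n = (n + 2) mod n" by (simp only: \<open>i + 3 = n + 2\<close>)
      also have "\<dots> = 2" using assms mod_add_self1[of n 2] by simp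
      finally have "(i + 3) mod n = 2" .
      note a b this
      then show ?thesis using assms h by (simp, linarith)
    qed
  qed
  have e0: "cycle_adj n x ((x+1) mod n)" if "x < n" for x
    unfolding cycle_adj_def using that by simp
  have h2: "(i+2) mod n = ((i+1) mod n + 1) mod n" by (simp add: mod_Suc_eq)
  have "i + 2 + 1 = i + 3" by simp
  then have h3: "(i+3) mod n = ((i+2) mod n + 1) mod n" using mod_add_left_eq[of "i+2" n 1] by metis
  have n0: "0 < n" using assms by simp
  have e: "cycle_adj n i ((i+1) mod n)" "cycle_adj n ((i+1) mod n) ((i+2) mod n)"
     "cycle_adj n ((i+2) mod n) ((i+3) mod n)"
    using e0[OF assms(2)] e0[of "(i+1) mod n"] e0[of "(i+2) mod n"] n0
    unfolding h2[symmetric] h3[symmetric] by auto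
  show ?thesis unfolding P4_ends_def
    using d e by blast
qed

lemma cyc_lower: assumes "odd n" "5 \<le> n" "ei_coloring {0..<n} (cycle_adj n) k f"
  shows "3 \<le> k"
proof (rule ccontr)
  assume "\<not> 3 \<le> k"
  have col: "f i = 1 \<or> f i = 2" if "i < n" for i
  proof -
    have "f i \<in> {1..k}" using assms(3) that unfolding ei_coloring_def by auto
    then show ?thesis using \<open>\<not> 3 \<le> k\<close> by auto
  qed
  have ne: "\<And>i. i < n \<Longrightarrow> f ((i+3) mod n) \<noteq> f i" using assms(3) cyc_P4[OF assms(2)]
    unfolding ei_coloring_def by metis
  have n0: "0 < n" using assms by simp
  have "f (3*j mod n) = (if even j then f 0 else 3 - f 0)" for j
  proof (induction j)
    case 0 then show ?case by simp
  next
    case (Suc j)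
    let ?i = "3*j mod n"
    have il: "?i < n" using n0 by simp
    have eq: "3 * Suc j mod n = (?i + 3) mod n" by (metis mod_add_right_eq mult_Suc_right add.commute)
    have "f ((?i+3) mod n) = 3 - f ?i"
      using col[OF il] col[of "(?i+3) mod n"] ne[OF il] n0 by auto
    then show ?case using Suc eq col[OF n0] by auto
  qed
  from this[of n] assms(1) have "f 0 = 3 - f 0" by simp
  then show False using col[OF n0] by auto
qed


lemma part1:
  fixes V :: "'a set"
  assumes G: "simple_graph V E"
  shows "chi_ei V E \<le> max_degree V E * (max_degree V E - 1)^2 + 1"
  using part1_ex[OF G] unfolding chi_ei_def by (auto intro: Least_le)

theorem proposition2p8:
  shows "(\<forall>(V :: 'a set) E. simple_graph V E \<longrightarrow>
            chi_ei V E \<le> max_degree V E * (max_degree V E - 1)^2 + 1)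
       \<and> (\<forall>n::nat. odd n \<and> 5 \<le> n \<longrightarrow>
            chi_ei {0..<n} (cycle_adj n)
              = max_degree {0..<n} (cycle_adj n) * (max_degree {0..<n} (cycle_adj n) - 1)^2 + 1)"
proof (intro conjI allI impI)
  fix V :: "'a set" and E assume "simple_graph V E"
  then show "chi_ei V E \<le> max_degree V E * (max_degree V E - 1)^2 + 1" by (rule part1)
next
  fix n :: nat assume h: "odd n \<and> 5 \<le> n"
  then have n3: "3 \<le> n" by simp
  have md: "max_degree {0..<n} (cycle_adj n) = 2" using cyc_maxdeg[OF n3] .
  obtain f where f: "ei_coloring {0..<n} (cycle_adj n) 3 f"
    using part1_ex[OF cyc_simple[OF n3]] unfolding md by auto
  have le: "chi_ei {0..<n} (cycle_adj n) \<le> 3"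
    unfolding chi_ei_def using f by (auto intro: Least_le)
  have "\<exists>g. ei_coloring {0..<n} (cycle_adj n) (chi_ei {0..<n} (cycle_adj n)) g"
    unfolding chi_ei_def
  proof (rule LeastI_ex)
    show "\<exists>k g. ei_coloring {0..<n} (cycle_adj n) k g" using f by blast
  qed
  then obtain g where "ei_coloring {0..<n} (cycle_adj n) (chi_ei {0..<n} (cycle_adj n)) g" by blast
  then have "3 \<le> chi_ei {0..<n} (cycle_adj n)" using cyc_lower h by blast
  with le show "chi_ei {0..<n} (cycle_adj n)
              = max_degree {0..<n} (cycle_adj n) * (max_degree {0..<n} (cycle_adj n) - 1)^2 + 1"
    unfolding md by simp
qed

end
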